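(* Let $V$ be a vector space over a field $\mathbb{K}$ and $F$ a bilinear form on $V$. For all integers $k,l\ge0$, $$a_k^F a_l^F=a_l^F a_k^F=\binom{k+l}{k}\,a_{k+l}^F$$ as endomorphisms of $\mathcal{T}(V)$.
   Context: $\mathcal{T}(V)$ is the tensor algebra of $V$. Define $a_0^F=\mathrm{Id}_{\mathcal{T}(V)}$ and, for $k>0$, the linear map $a_k^F$ on $\mathcal{T}(V)$ by $a_k^F(x_1\otimes\cdots\otimes x_p)=0$ if $p<2k$, and for $p\ge2k$ $$a_k^F(x_1\otimes\cdots\otimes x_p)=\sum_{(i_1,j_1,\dots,i_k,j_k)}(-1)^{\sigma}F(x_{i_1},x_{j_1})\cdots F(x_{i_k},x_{j_k})\,X_{(i_1,\dots,j_k)},$$ summing over pairwise distinct indices in $\{1,\dots,p\}$ with $i_l<j_l$ and $i_1<\cdots<i_k$, where $X_{(i_1,\dots,j_k)}$ is $x_1\otimes\cdots\otimes x_p$ with the factors $x_{i_1},x_{j_1},\dots,x_{i_k},x_{j_k}$ omitted, and $(-1)^\sigma$ is the sign of the permutation of $\{1,\dots,p\}$ given by $i_1,j_1,\dots,i_k,j_k$ followed by the remaining indices in increasing order. The binomial coefficient is interpreted as an integer multiple in $\mathbb{K}$. *)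

theory Defs
  imports Main "HOL.Vector_Spaces"
begin

text \<open>Elements of the tensor algebra T(V) are represented by finitely supported
  formal linear combinations of words (lists) over V, i.e. functions
  u :: 'v list \<Rightarrow> 'k with finite support, modulo the subspace spanned by the
  multilinearity relations.  The word [x1,...,xp] stands for x1 \<otimes> ... \<otimes> xp.\<close>

definition bilinear_form :: "('k::field \<Rightarrow> 'v::ab_group_add \<Rightarrow> 'v) \<Rightarrow> ('v \<Rightarrow> 'v \<Rightarrow> 'k) \<Rightarrow> bool" where
  "bilinear_form scale F \<longleftrightarrow>
     (\<forall>a x y z. F (scale a x + y) z = a * F x z + F y z) \<and>
     (\<forall>a x y z. F z (scale a x + y) = a * F z x + F z y)"

definition word :: "'v list \<Rightarrow> 'v list \<Rightarrow> 'k::field" where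
  "word w = (\<lambda>w'. if w' = w then 1 else 0)"

definition fin_supp :: "('v list \<Rightarrow> 'k::field) \<Rightarrow> bool" where
  "fin_supp u \<longleftrightarrow> finite {w. u w \<noteq> 0}"

inductive_set tensor_rel :: "('k::field \<Rightarrow> 'v::ab_group_add \<Rightarrow> 'v) \<Rightarrow> ('v list \<Rightarrow> 'k) set"
  for scale where
  zero: "(\<lambda>_. 0) \<in> tensor_rel scale"
| gen: "(\<lambda>w. word (w1 @ [scale a x + y] @ w2) w - a * word (w1 @ [x] @ w2) w
              - word (w1 @ [y] @ w2) w) \<in> tensor_rel scale"
| add: "u \<in> tensor_rel scale \<Longrightarrow> v \<in> tensor_rel scale \<Longrightarrow> (\<lambda>w. u w + v w) \<in> tensor_rel scale"
| smult: "u \<in> tensor_rel scale \<Longrightarrow> (\<lambda>w. c * u w) \<in> tensor_rel scale"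

text \<open>Admissible index tuples (i1,j1,...,ik,jk), 0-based indices in {0..<p}.\<close>
definition pairings :: "nat \<Rightarrow> nat \<Rightarrow> (nat \<times> nat) list set" where
  "pairings k p = {ps. length ps = k \<and> (\<forall>(i,j)\<in>set ps. i < j \<and> j < p)
       \<and> sorted_wrt (<) (map fst ps) \<and> distinct (concat (map (\<lambda>(i,j). [i,j]) ps))}"

definition used_idx :: "(nat \<times> nat) list \<Rightarrow> nat list" where
  "used_idx ps = concat (map (\<lambda>(i,j). [i,j]) ps)"

text \<open>Sign of the permutation m \<mapsto> ws!m (ws a list enumerating {0..<length ws}),
  computed as (-1)^(number of inversions).\<close>
definition perm_list_sign :: "nat list \<Rightarrow> 'k::field" where
  "perm_list_sign ws = (-1) ^ card {(a,b). a < b \<and> b < length ws \<and> ws ! b < ws ! a}"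

definition pairing_sign :: "nat \<Rightarrow> (nat \<times> nat) list \<Rightarrow> 'k::field" where
  "pairing_sign p ps = perm_list_sign (used_idx ps @ filter (\<lambda>i. i \<notin> set (used_idx ps)) [0..<p])"

definition a_word :: "('v \<Rightarrow> 'v \<Rightarrow> 'k::field) \<Rightarrow> nat \<Rightarrow> 'v list \<Rightarrow> 'v list \<Rightarrow> 'k" where
  "a_word F k xs = (\<lambda>w. \<Sum>ps\<in>pairings k (length xs).
      if nths xs (- set (used_idx ps)) = w
      then pairing_sign (length xs) ps * (\<Prod>(i,j)\<leftarrow>ps. F (xs ! i) (xs ! j))
      else 0)"

definition a_op :: "('v \<Rightarrow> 'v \<Rightarrow> 'k::field) \<Rightarrow> nat \<Rightarrow> ('v list \<Rightarrow> 'k) \<Rightarrow> ('v list \<Rightarrow> 'k)" where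
  "a_op F k u = (\<lambda>w. \<Sum>v\<in>{v. u v \<noteq> 0}. u v * a_word F k v w)"

end

theory Submission
  imports Defs
begin


definition supp :: "('v list \<Rightarrow> 'k::field) \<Rightarrow> 'v list set" where
  "supp u = {w. u w \<noteq> 0}"

definition ext :: "('v list \<Rightarrow> 'v list \<Rightarrow> 'k::field) \<Rightarrow> ('v list \<Rightarrow> 'k) \<Rightarrow> 'v list \<Rightarrow> 'k" where
  "ext f u = (\<lambda>w. \<Sum>v\<in>{v. u v \<noteq> 0}. u v * f v w)"

lemma a_op_ext: "a_op F k = ext (a_word F k)"
  by (simp add: fun_eq_iff a_op_def ext_def)

lemma ext_superset:
  assumes "finite T" "supp u \<subseteq> T"
  shows "ext f u w = (\<Sum>v\<in>T. u v * f v w)"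
  unfolding ext_def
  by (rule sum.mono_neutral_left) (use assms in \<open>auto simp: supp_def\<close>)

lemma fin_supp_iff: "fin_supp u \<longleftrightarrow> finite (supp u)"
  by (simp add: fin_supp_def supp_def)

lemma ext_cong: "(\<And>v. v \<in> supp u \<Longrightarrow> f v = g v) \<Longrightarrow> ext f u = ext g u"
  unfolding ext_def supp_def by (auto intro!: sum.cong)

lemma ext_zero[simp]: "ext f (\<lambda>_. 0) = (\<lambda>_. 0)"
  by (simp add: ext_def)

lemma supp_word[simp]: "supp (word v) = {v}"
  by (auto simp: supp_def word_def)

lemma fin_supp_word[simp]: "fin_supp (word v)"
  by (simp add: fin_supp_iff)

lemma ext_word[simp]: "ext f (word v) = f v"
proof
  fix w show "ext f (word v) w = f v w"
    by (subst ext_superset[of "{v}"]) (auto simp: word_def supp_def)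
qed

lemma ext_word2:
  assumes "fin_supp u" shows "ext word u = u"
proof
  fix w
  have "ext word u w = (\<Sum>v\<in>supp u \<union> {w}. u v * word v w)"
    using assms by (intro ext_superset) (auto simp: fin_supp_iff)
  also have "\<dots> = u w"
  proof -
    have "(\<Sum>v\<in>supp u \<union> {w}. u v * word v w) = (\<Sum>v\<in>supp u \<union> {w}. if v = w then u v else 0)"
      by (intro sum.cong refl) (auto simp: word_def)
    also have "\<dots> = u w" using assms by (simp add: fin_supp_iff)
    finally show ?thesis .
  qed
  finally show "ext word u w = u w" .
qed

lemma ext_lin:
  assumes "fin_supp u1" "fin_supp u2"
  shows "ext f (\<lambda>w. a * u1 w + b * u2 w) = (\<lambda>w. a * ext f u1 w + b * ext f u2 w)"
proof
  fix w
  let ?T = "supp u1 \<union> supp u2"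
  have fT: "finite ?T" using assms by (simp add: fin_supp_iff)
  have "ext f (\<lambda>w. a * u1 w + b * u2 w) w = (\<Sum>v\<in>?T. (a * u1 v + b * u2 v) * f v w)"
    by (rule ext_superset[OF fT]) (auto simp: supp_def)
  also have "\<dots> = a * (\<Sum>v\<in>?T. u1 v * f v w) + b * (\<Sum>v\<in>?T. u2 v * f v w)"
    by (simp add: sum.distrib sum_distrib_left algebra_simps)
  also have "\<dots> = a * ext f u1 w + b * ext f u2 w"
    using fT by (simp add: ext_superset[of ?T u1] ext_superset[of ?T u2])
  finally show "ext f (\<lambda>w. a * u1 w + b * u2 w) w = a * ext f u1 w + b * ext f u2 w" .
qed

lemma ext_smult:
  assumes "fin_supp u"
  shows "ext f (\<lambda>w. a * u w) = (\<lambda>w. a * ext f u w)"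
  using ext_lin[OF assms assms, of f a 0] by simp

lemma ext_add:
  assumes "fin_supp u1" "fin_supp u2"
  shows "ext f (\<lambda>w. u1 w + u2 w) = (\<lambda>w. ext f u1 w + ext f u2 w)"
  using ext_lin[OF assms, of f 1 1] by simp

lemma ext_diff:
  assumes "fin_supp u1" "fin_supp u2"
  shows "ext f (\<lambda>w. u1 w - u2 w) = (\<lambda>w. ext f u1 w - ext f u2 w)"
  using ext_lin[OF assms, of f 1 "-1"] by simp

lemma ext_uminus:
  assumes "fin_supp u"
  shows "ext f (\<lambda>w. - u w) = (\<lambda>w. - ext f u w)"
  using ext_lin[OF assms assms, of f "-1" 0] by simp

lemma fin_supp_lin:
  "fin_supp u1 \<Longrightarrow> fin_supp u2 \<Longrightarrow> fin_supp (\<lambda>w. a * u1 w + b * u2 w)"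
  unfolding fin_supp_iff supp_def
  by (rule finite_subset[of _ "{w. u1 w \<noteq> 0} \<union> {w. u2 w \<noteq> 0}"]) auto

lemma fin_supp_add: "fin_supp u1 \<Longrightarrow> fin_supp u2 \<Longrightarrow> fin_supp (\<lambda>w. u1 w + u2 w)"
  using fin_supp_lin[of u1 u2 1 1] by simp
lemma fin_supp_diff: "fin_supp u1 \<Longrightarrow> fin_supp u2 \<Longrightarrow> fin_supp (\<lambda>w. u1 w - u2 w)"
  using fin_supp_lin[of u1 u2 1 "-1"] by simp
lemma fin_supp_smult: "fin_supp u \<Longrightarrow> fin_supp (\<lambda>w. a * u w)"
  using fin_supp_lin[of u u a 0] by simp
lemma fin_supp_uminus: "fin_supp u \<Longrightarrow> fin_supp (\<lambda>w. - u w)"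
  using fin_supp_lin[of u u "-1" 0] by simp

lemma supp_ext: "supp (ext f u) \<subseteq> (\<Union>v\<in>supp u. supp (f v))"
  unfolding supp_def ext_def by (auto elim!: sum.not_neutral_contains_not_neutral)

lemma fin_supp_ext:
  assumes "fin_supp u" "\<And>v. v \<in> supp u \<Longrightarrow> fin_supp (f v)"
  shows "fin_supp (ext f u)"
  using assms supp_ext[of f u] unfolding fin_supp_iff
  by (meson finite_UN_I finite_subset)

lemma ext_ext:
  assumes "fin_supp u" "\<And>v. v \<in> supp u \<Longrightarrow> fin_supp (f v)"
  shows "ext g (ext f u) = ext (\<lambda>v. ext g (f v)) u"
proof
  fix w
  let ?S = "supp u"
  let ?T = "\<Union>v\<in>?S. supp (f v)"
  have fS: "finite ?S" using assms by (simp add: fin_supp_iff)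
  have fT: "finite ?T" using assms fS by (auto simp: fin_supp_iff)
  have "ext g (ext f u) w = (\<Sum>w'\<in>?T. ext f u w' * g w' w)"
    by (rule ext_superset[OF fT supp_ext])
  also have "\<dots> = (\<Sum>w'\<in>?T. (\<Sum>v\<in>?S. u v * f v w') * g w' w)"
    by (intro sum.cong refl) (simp add: ext_def supp_def)
  also have "\<dots> = (\<Sum>v\<in>?S. u v * (\<Sum>w'\<in>?T. f v w' * g w' w))"
    by (simp add: sum_distrib_left sum_distrib_right mult.assoc sum.swap[of _ ?T])
  also have "\<dots> = (\<Sum>v\<in>?S. u v * ext g (f v) w)"
    by (intro sum.cong refl arg_cong2[where f="(*)"] ext_superset[symmetric] fT) auto
  also have "\<dots> = ext (\<lambda>v. ext g (f v)) u w"
    by (simp add: ext_def supp_def)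
  finally show "ext g (ext f u) w = ext (\<lambda>v. ext g (f v)) u w" .
qed

lemma ext_sum_words:
  assumes "finite I"
  shows "ext f (\<lambda>w. \<Sum>i\<in>I. if v i = w then c i else 0) = (\<lambda>w. \<Sum>i\<in>I. c i * f (v i) w)"
proof
  fix w
  let ?u = "\<lambda>w. \<Sum>i\<in>I. if v i = w then c i else 0"
  have "supp ?u \<subseteq> v ` I"
    by (auto simp: supp_def elim!: sum.not_neutral_contains_not_neutral split: if_splits)
  then have "ext f ?u w = (\<Sum>x\<in>v ` I. ?u x * f x w)"
    using assms by (intro ext_superset) auto
  also have "\<dots> = (\<Sum>x\<in>v ` I. \<Sum>i\<in>{i\<in>I. v i = x}. c i * f (v i) w)"
    by (intro sum.cong refl) (simp add: sum.inter_filter assms sum_distrib_right, intro sum.cong, auto)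
  also have "\<dots> = (\<Sum>i\<in>I. c i * f (v i) w)"
    by (rule sum.image_gen[symmetric]) (rule assms)
  finally show "ext f ?u w = (\<Sum>i\<in>I. c i * f (v i) w)" .
qed



definition pre :: "'v \<Rightarrow> ('v list \<Rightarrow> 'k::field) \<Rightarrow> 'v list \<Rightarrow> 'k" where
  "pre y u = (\<lambda>w. case w of [] \<Rightarrow> 0 | z # w' \<Rightarrow> if z = y then u w' else 0)"

definition del :: "nat \<Rightarrow> 'v list \<Rightarrow> 'v list" where
  "del m ys = take m ys @ drop (Suc m) ys"

definition cw :: "('v \<Rightarrow> 'v \<Rightarrow> 'k::field) \<Rightarrow> 'v \<Rightarrow> 'v list \<Rightarrow> 'v list \<Rightarrow> 'k" where
  "cw F x ys = (\<lambda>w. \<Sum>m<length ys. if del m ys = w then (-1)^m * F x (ys ! m) else 0)"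

lemma supp_pre: "supp (pre y u) = Cons y ` supp u"
proof (rule set_eqI)
  fix x show "x \<in> supp (pre y u) \<longleftrightarrow> x \<in> Cons y ` supp u"
    by (cases x) (auto simp: supp_def pre_def)
qed

lemma fin_supp_pre[simp]: "fin_supp u \<Longrightarrow> fin_supp (pre y u)"
  by (simp add: fin_supp_iff supp_pre)

lemma ext_pre:
  assumes "fin_supp u"
  shows "ext g (pre y u) = ext (\<lambda>v. g (y # v)) u"
proof
  fix w
  have f: "finite (supp u)" using assms by (simp add: fin_supp_iff)
  have "ext g (pre y u) w = (\<Sum>v\<in>Cons y ` supp u. pre y u v * g v w)"
    by (rule ext_superset) (use f in \<open>auto simp: supp_pre\<close>)
  also have "\<dots> = (\<Sum>v\<in>supp u. u v * g (y # v) w)"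
    by (subst sum.reindex) (auto simp: pre_def)
  also have "\<dots> = ext (\<lambda>v. g (y # v)) u w"
    by (rule ext_superset[symmetric]) (use f in auto)
  finally show "ext g (pre y u) w = ext (\<lambda>v. g (y # v)) u w" .
qed

lemma pre_ext: "pre y (ext f u) = ext (\<lambda>v. pre y (f v)) u"
  by (auto simp: fun_eq_iff pre_def ext_def split: list.splits)

lemma pre_lin: "pre y (\<lambda>w. a * u1 w + b * u2 w) = (\<lambda>w. a * pre y u1 w + b * pre y u2 w)"
  by (auto simp: fun_eq_iff pre_def split: list.splits)

lemma pre_uminus: "pre y (\<lambda>w. - u w) = (\<lambda>w. - pre y u w)"
  by (auto simp: fun_eq_iff pre_def split: list.splits)

lemma pre_zero[simp]: "pre y (\<lambda>_. 0) = (\<lambda>_. 0)"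
  by (auto simp: fun_eq_iff pre_def split: list.splits)

lemma ext_flin: "ext (\<lambda>v w. a * f1 v w + b * f2 v w) u = (\<lambda>w. a * ext f1 u w + b * ext f2 u w)"
  by (simp add: fun_eq_iff ext_def sum.distrib sum_distrib_left algebra_simps)

lemma ext_fsmult: "ext (\<lambda>v w. a * f v w) u = (\<lambda>w. a * ext f u w)"
  by (simp add: fun_eq_iff ext_def sum_distrib_left algebra_simps)

lemma length_del: "m < length ys \<Longrightarrow> length (del m ys) = length ys - 1"
  by (simp add: del_def)

lemma supp_cw: "supp (cw F x ys) \<subseteq> (\<lambda>m. del m ys) ` {..<length ys}"
  by (auto simp: supp_def cw_def elim!: sum.not_neutral_contains_not_neutral split: if_splits)

lemma fin_supp_cw[simp]: "fin_supp (cw F x ys)"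
  unfolding fin_supp_iff by (rule finite_subset[OF supp_cw]) auto

lemma supp_cw_length: "v \<in> supp (cw F x ys) \<Longrightarrow> length v < length ys"
  using supp_cw[of F x ys] by (auto simp: length_del)

lemma cw_Nil[simp]: "cw F x [] = (\<lambda>_. 0)"
  by (simp add: cw_def fun_eq_iff)

lemma cw_Cons: "cw F x (z # zs) = (\<lambda>w. F x z * word zs w - pre z (cw F x zs) w)"
proof
  fix w
  have "cw F x (z # zs) w = (if zs = w then F x z else 0) +
      (\<Sum>m<length zs. if z # del m zs = w then - ((-1)^m * F x (zs ! m)) else 0)"
  proof -
    have e: "\<And>m. del (Suc m) (z#zs) = z # del m zs" "del 0 (z#zs) = zs" by (simp_all add: del_def)
    show ?thesis
      unfolding cw_def by (simp only: length_Cons sum.lessThan_Suc_shift e nth_Cons_0 nth_Cons_Suc power_Suc) (auto intro!: sum.cong)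
  qed
  also have "(\<Sum>m<length zs. if z # del m zs = w then - ((-1)^m * F x (zs ! m)) else 0) = - pre z (cw F x zs) w"
    by (cases w) (auto simp: pre_def cw_def sum_negf[symmetric] intro!: sum.cong)
  finally show "cw F x (z # zs) w = F x z * word zs w - pre z (cw F x zs) w"
    by (simp add: word_def eq_commute)
qed

lemma ext_cw_pre:
  assumes "fin_supp u"
  shows "ext (cw F x) (pre z u) = (\<lambda>w. F x z * u w - pre z (ext (cw F x) u) w)"
proof -
  have "ext (cw F x) (pre z u) = ext (\<lambda>v w. F x z * word v w + (-1) * pre z (cw F x v) w) u"
    by (simp add: ext_pre assms cw_Cons)
  also have "\<dots> = (\<lambda>w. F x z * u w - pre z (ext (cw F x) u) w)"
    by (simp only: ext_flin ext_word2[OF assms]) (simp add: pre_ext)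
  finally show ?thesis .
qed

lemma anticomm: "ext (cw F x) (cw F y ys) = (\<lambda>w. - ext (cw F y) (cw F x ys) w)"
proof (induction ys arbitrary: x y)
  case Nil
  then show ?case by simp
next
  case (Cons z zs)
  have a: "ext (cw F x) (cw F y (z # zs)) = (\<lambda>w. F y z * cw F x zs w - (F x z * cw F y zs w - pre z (ext (cw F x) (cw F y zs)) w))"
    by (simp add: cw_Cons ext_diff fin_supp_smult ext_smult ext_cw_pre)
  moreover have b: "ext (cw F y) (cw F x (z # zs)) = (\<lambda>w. F x z * cw F y zs w - (F y z * cw F x zs w - pre z (ext (cw F y) (cw F x zs)) w))"
    by (simp add: cw_Cons ext_diff fin_supp_smult ext_smult ext_cw_pre)
  have c: "pre z (ext (cw F x) (cw F y zs)) w = - pre z (ext (cw F y) (cw F x zs)) w" for w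
    by (simp add: Cons.IH[of x y] pre_uminus)
  show ?case
    unfolding a b by (rule ext) (simp add: c)
qed



definition rest :: "nat \<Rightarrow> (nat \<times> nat) list \<Rightarrow> nat list" where
  "rest p ps = filter (\<lambda>i. i \<notin> set (used_idx ps)) [0..<p]"

lemma nths_eq: "nths xs A = map (nth xs) (filter (\<lambda>i. i \<in> A) [0..<length xs])"
proof (induction xs arbitrary: A)
  case Nil
  then show ?case by simp
next
  case (Cons x xs)
  have "[0..<length (x # xs)] = 0 # map Suc [0..<length xs]"
    by (simp add: upt_conv_Cons map_Suc_upt del: upt_Suc)
  then show ?case
    by (simp add: nths_Cons Cons.IH filter_map o_def)
qed

lemma nths_rest: "nths xs (- set (used_idx ps)) = map (nth xs) (rest (length xs) ps)"
  by (simp add: nths_eq rest_def)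

lemma used_idx_Nil[simp]: "used_idx [] = []"
  by (simp add: used_idx_def)
lemma used_idx_Cons[simp]: "used_idx ((i,j) # ps) = i # j # used_idx ps"
  by (simp add: used_idx_def)
lemma used_idx_map: "used_idx (map (map_prod h h) ps) = map h (used_idx ps)"
  by (induction ps) auto
lemma set_used_idx: "set (used_idx ps) = fst ` set ps \<union> snd ` set ps"
  by (induction ps) force+
lemma length_used_idx: "length (used_idx ps) = 2 * length ps"
  by (induction ps) auto

lemma pairings_alt: "pairings k p = {ps. length ps = k \<and> (\<forall>(i,j)\<in>set ps. i < j \<and> j < p)
       \<and> sorted_wrt (<) (map fst ps) \<and> distinct (used_idx ps)}"
  by (simp add: pairings_def used_idx_def)

lemma pairings_0[simp]: "pairings 0 p = {[]}"
  by (auto simp: pairings_alt)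

lemma Nil_pairings_Suc[simp]: "[] \<notin> pairings (Suc k) p"
  by (auto simp: pairings_alt)

lemma pairings_Cons: "((i,j) # ps \<in> pairings (Suc k) p) \<longleftrightarrow>
   i < j \<and> j < p \<and> ps \<in> pairings k p \<and> (\<forall>x\<in>set ps. i < fst x) \<and>
   i \<notin> set (used_idx ps) \<and> j \<notin> set (used_idx ps)"
  by (auto simp: pairings_alt)

lemma pairings_Suc_0[simp]: "pairings (Suc k) 0 = {}"
proof -
  have False if "ps \<in> pairings (Suc k) 0" for ps
  proof (cases ps)
    case Nil then show ?thesis using that by simp
  next
    case (Cons x xs) then show ?thesis using that by (cases x) (auto simp: pairings_Cons)
  qed
  then show ?thesis by blast
qed

lemma pairings_used_less: "ps \<in> pairings k p \<Longrightarrow> a \<in> set (used_idx ps) \<Longrightarrow> a < p"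
  by (auto simp: pairings_alt set_used_idx)

lemma pairings_distinct: "ps \<in> pairings k p \<Longrightarrow> distinct (used_idx ps)"
  by (auto simp: pairings_alt)

lemma finite_pairings: "finite (pairings k p)"
proof -
  have "pairings k p \<subseteq> {ps. set ps \<subseteq> {0..<p} \<times> {0..<p} \<and> length ps = k}"
    by (auto simp: pairings_alt)
  moreover have "finite {ps. set ps \<subseteq> {0..<p} \<times> {0..<p} \<and> length ps = k}"
    by (rule finite_lists_length_eq) auto
  ultimately show ?thesis by (rule finite_subset)
qed

lemma pairings_map:
  assumes "ps \<in> pairings k p"
    and mono: "\<And>a b. a \<in> set (used_idx ps) \<Longrightarrow> b \<in> set (used_idx ps) \<Longrightarrow> a < b \<Longrightarrow> h a < h b"
    and bound: "\<And>a. a \<in> set (used_idx ps) \<Longrightarrow> h a < p'"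
  shows "map (map_prod h h) ps \<in> pairings k p'"
proof -
  have inj: "inj_on h (set (used_idx ps))"
    by (rule inj_onI) (metis mono linorder_neqE_nat less_irrefl)
  have fst_in: "fst x \<in> set (used_idx ps)" "snd x \<in> set (used_idx ps)" if "x \<in> set ps" for x
    using that by (auto simp: set_used_idx)
  have "sorted_wrt (<) (map fst ps)" using assms(1) by (simp add: pairings_alt)
  then have "sorted_wrt (<) (map (h \<circ> fst) ps)"
    by (auto simp: sorted_wrt_map intro!: mono fst_in elim!: sorted_wrt_mono_rel[rotated])
  moreover have "distinct (map h (used_idx ps))"
    using assms(1) inj by (simp add: pairings_alt distinct_map)
  moreover have "h i < h j \<and> h j < p'" if "(i,j) \<in> set ps" for i j
  proof -
    have "i < j" using assms(1) that by (auto simp: pairings_alt)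
    moreover have "i \<in> set (used_idx ps)" "j \<in> set (used_idx ps)"
      using that by (force simp: set_used_idx)+
    ultimately show ?thesis by (auto intro: mono bound)
  qed
  ultimately show ?thesis using assms(1)
    by (auto simp: pairings_alt used_idx_map o_def)
qed


definition invs :: "nat list \<Rightarrow> (nat \<times> nat) set" where
  "invs ws = {(a,b). a < b \<and> b < length ws \<and> ws ! b < ws ! a}"

lemma perm_list_sign_invs: "perm_list_sign ws = (-1) ^ card (invs ws)"
  by (simp add: perm_list_sign_def invs_def)

lemma finite_invs: "finite (invs ws)"
  by (rule finite_subset[of _ "{..<length ws} \<times> {..<length ws}"]) (auto simp: invs_def)

lemma sign_Cons: "perm_list_sign (a # ws) = (-1) ^ length (filter (\<lambda>x. x < a) ws) * perm_list_sign ws"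
proof -
  have eq: "invs (a # ws) = (\<lambda>j. (0, Suc j)) ` {j. j < length ws \<and> ws ! j < a}
      \<union> (\<lambda>(i,j). (Suc i, Suc j)) ` invs ws"
  proof (rule set_eqI)
    fix x :: "nat \<times> nat"
    obtain i j where x: "x = (i, j)" by (cases x)
    show "x \<in> invs (a # ws) \<longleftrightarrow> x \<in> (\<lambda>j. (0, Suc j)) ` {j. j < length ws \<and> ws ! j < a}
      \<union> (\<lambda>(i,j). (Suc i, Suc j)) ` invs ws"
    proof (cases i)
      case 0
      then show ?thesis unfolding x by (cases j) (auto simp: invs_def)
    next
      case (Suc i')
      then show ?thesis unfolding x by (cases j) (auto simp: invs_def)
    qed
  qed
  have disj: "(\<lambda>j. (0::nat, Suc j)) ` {j. j < length ws \<and> ws ! j < a} \<inter> (\<lambda>(i,j). (Suc i, Suc j)) ` invs ws = {}"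
    by auto
  have inj: "inj_on (\<lambda>(i::nat,j::nat). (Suc i, Suc j)) (invs ws)"
    by (rule inj_onI) auto
  have "card (invs (a # ws)) = card {j. j < length ws \<and> ws ! j < a} + card (invs ws)"
    unfolding eq using inj
    by (subst card_Un_disjoint[OF _ _ disj]) (auto simp: finite_invs card_image inj_on_def)
  then show ?thesis
    by (simp add: perm_list_sign_invs length_filter_conv_card power_add)
qed

lemma sign_map_mono: "strict_mono g \<Longrightarrow> perm_list_sign (map g ws) = perm_list_sign ws"
  unfolding perm_list_sign_invs
  by (rule arg_cong[where f="\<lambda>n. (-1) ^ card n"]) (auto simp: invs_def strict_mono_less)

lemma sign_shift0: "perm_list_sign (map Suc A @ 0 # map Suc B) = (-1) ^ length A * perm_list_sign (A @ B)"
proof (induction A)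
  case Nil
  then show ?case by (simp add: sign_Cons sign_map_mono strict_mono_Suc_iff)
next
  case (Cons a A)
  have "length (filter (\<lambda>x. x < Suc a) (map Suc A @ 0 # map Suc B)) = Suc (length (filter (\<lambda>x. x < a) (A @ B)))"
    by (simp add: filter_map o_def)
  then show ?case
    by (simp add: sign_Cons Cons.IH)
qed

lemma sign_upt: "perm_list_sign [0..<p] = 1"
proof -
  have "invs [0..<p] = {}" by (auto simp: invs_def)
  then show ?thesis by (simp add: perm_list_sign_invs)
qed

lemma A0: "a_word F 0 xs = word xs"
  by (auto simp: a_word_def fun_eq_iff word_def pairing_sign_def sign_upt nths_all)

lemma A_Nil: "a_word F (Suc k) [] = (\<lambda>_. 0)"
  by (simp add: a_word_def fun_eq_iff)


lemma pairing_sign_rest: "pairing_sign p ps = perm_list_sign (used_idx ps @ rest p ps)"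
  by (simp add: pairing_sign_def rest_def)

lemma pairings_A: "map (map_prod Suc Suc) ` pairings K p = {ps \<in> pairings K (Suc p). 0 \<notin> set (used_idx ps)}"
proof (rule set_eqI, rule iffI)
  fix ps assume "ps \<in> map (map_prod Suc Suc) ` pairings K p"
  then obtain ps' where ps': "ps' \<in> pairings K p" "ps = map (map_prod Suc Suc) ps'" by blast
  have "map (map_prod Suc Suc) ps' \<in> pairings K (Suc p)"
    by (rule pairings_map[OF ps'(1)]) (auto dest: pairings_used_less[OF ps'(1)])
  then show "ps \<in> {ps \<in> pairings K (Suc p). 0 \<notin> set (used_idx ps)}"
    using ps' by (auto simp: used_idx_map)
next
  fix ps assume ps: "ps \<in> {ps \<in> pairings K (Suc p). 0 \<notin> set (used_idx ps)}"
  let ?ps' = "map (map_prod (\<lambda>c. c - 1) (\<lambda>c. c - 1)) ps"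
  have nz: "a \<noteq> 0" if "a \<in> set (used_idx ps)" for a
  proof
    assume "a = 0" with that ps show False by simp
  qed
  have "?ps' \<in> pairings K p"
    by (rule pairings_map) (use ps nz pairings_used_less in \<open>force+\<close>)
  moreover have "map (map_prod Suc Suc) ?ps' = ps"
    unfolding map_map
  proof (rule map_idI)
    fix x assume x: "x \<in> set ps"
    obtain i j where ij: "x = (i, j)" by (cases x)
    have "i \<in> set (used_idx ps)" "j \<in> set (used_idx ps)" using x ij by (force simp: set_used_idx)+
    then show "(map_prod Suc Suc \<circ> map_prod (\<lambda>c. c - 1) (\<lambda>c. c - 1)) x = x"
      using nz ij by auto
  qed
  ultimately show "ps \<in> map (map_prod Suc Suc) ` pairings K p" by (metis image_eqI)
qed


lemma rest_A: "rest (Suc p) (map (map_prod Suc Suc) ps) = 0 # map Suc (rest p ps)"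
proof -
  have "[0..<Suc p] = 0 # map Suc [0..<p]"
    by (simp add: upt_conv_Cons map_Suc_upt del: upt_Suc)
  then show ?thesis
    by (simp add: rest_def used_idx_map filter_map o_def image_iff del: upt_Suc) (auto intro!: filter_cong)
qed

lemma sign_A: "pairing_sign (Suc p) (map (map_prod Suc Suc) ps) = pairing_sign p ps"
  by (simp add: pairing_sign_rest used_idx_map rest_A sign_shift0 length_used_idx)

definition gm :: "nat \<Rightarrow> nat \<Rightarrow> nat" where
  "gm m c = (if c < m then Suc c else Suc (Suc c))"

definition gi :: "nat \<Rightarrow> nat \<Rightarrow> nat" where
  "gi m c = (if c \<le> m then c - 1 else c - 2)"

lemma strict_mono_gm: "strict_mono (gm m)"
  by (rule strict_monoI) (auto simp: gm_def)

lemma inj_gm: "inj (gm m)"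
  using strict_mono_gm strict_mono_imp_inj_on by blast

lemma gm_neq[simp]: "gm m c \<noteq> 0" "gm m c \<noteq> Suc m" "Suc m \<noteq> gm m c"
  by (auto simp: gm_def)

lemma gm_less_Suc: "gm m c < Suc m \<longleftrightarrow> c < m"
  by (auto simp: gm_def)

lemma gm_gi: "c \<noteq> 0 \<Longrightarrow> c \<noteq> Suc m \<Longrightarrow> gm m (gi m c) = c"
  by (auto simp: gm_def gi_def)

lemma nth_gm: "m < length ys \<Longrightarrow> c < length ys - 1 \<Longrightarrow> (y # ys) ! gm m c = del m ys ! c"
  by (auto simp: gm_def del_def nth_append min_def)

lemma pairings_B: "(\<lambda>(m,qs). (0, Suc m) # map (map_prod (gm m) (gm m)) qs) ` (SIGMA m:{..<p}. pairings k (p - 1))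
   = {ps \<in> pairings (Suc k) (Suc p). 0 \<in> set (used_idx ps)}"
proof (rule set_eqI, rule iffI)
  fix ps assume "ps \<in> (\<lambda>(m,qs). (0, Suc m) # map (map_prod (gm m) (gm m)) qs) ` (SIGMA m:{..<p}. pairings k (p - 1))"
  then obtain m qs where mq: "m < p" "qs \<in> pairings k (p - 1)" "ps = (0, Suc m) # map (map_prod (gm m) (gm m)) qs"
    by auto
  have t: "map (map_prod (gm m) (gm m)) qs \<in> pairings k (Suc p)"
  proof (rule pairings_map[OF mq(2)])
    show "gm m a < gm m b" if "a < b" for a b using strict_mono_gm that by (simp add: strict_mono_less)
    show "gm m a < Suc p" if "a \<in> set (used_idx qs)" for a
      using pairings_used_less[OF mq(2) that] by (auto simp: gm_def)
  qed
  have "\<forall>x\<in>set (map (map_prod (gm m) (gm m)) qs). 0 < fst x" by (auto simp: gm_def)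
  then show "ps \<in> {ps \<in> pairings (Suc k) (Suc p). 0 \<in> set (used_idx ps)}"
    using mq t by (auto simp: pairings_Cons used_idx_map)
next
  fix ps assume ps: "ps \<in> {ps \<in> pairings (Suc k) (Suc p). 0 \<in> set (used_idx ps)}"
  obtain i0 j0 rs where ps_eq: "ps = (i0, j0) # rs"
    using ps by (cases ps) auto
  have P: "i0 < j0" "j0 < Suc p" "rs \<in> pairings k (Suc p)" "\<forall>x\<in>set rs. i0 < fst x"
      "i0 \<notin> set (used_idx rs)" "j0 \<notin> set (used_idx rs)"
  proof -
    have "(i0, j0) # rs \<in> pairings (Suc k) (Suc p)" using ps ps_eq by simp
    then show "i0 < j0" "j0 < Suc p" "rs \<in> pairings k (Suc p)" "\<forall>x\<in>set rs. i0 < fst x"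
      "i0 \<notin> set (used_idx rs)" "j0 \<notin> set (used_idx rs)"
      unfolding pairings_Cons by auto
  qed
  have "0 \<in> set (used_idx ps)" using ps by auto
  then have "i0 = 0 \<or> j0 = 0 \<or> 0 \<in> set (used_idx rs)" unfolding ps_eq by auto
  moreover have "0 \<notin> set (used_idx rs)"
  proof
    assume "0 \<in> set (used_idx rs)"
    then obtain x where x: "x \<in> set rs" "fst x = 0 \<or> snd x = 0" by (force simp: set_used_idx)
    have "fst x < snd x" using P(3) x(1) by (auto simp: pairings_alt)
    then show False using x P(4) by auto
  qed
  ultimately have i0: "i0 = 0" using P(1) by auto
  obtain m where m: "j0 = Suc m" using P(1) i0 by (cases j0) auto
  have mp: "m < p" using P(2) m by simp
  have U: "a \<noteq> 0" "a \<noteq> Suc m" "a < Suc p" if "a \<in> set (used_idx rs)" for a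
  proof -
    show "a \<noteq> 0" proof assume "a = 0" with that P(5) i0 show False by simp qed
    show "a \<noteq> Suc m" proof assume "a = Suc m" with that P(6) m show False by simp qed
    show "a < Suc p" using that pairings_used_less[OF P(3)] by blast
  qed
  let ?qs = "map (map_prod (gi m) (gi m)) rs"
  have qs: "?qs \<in> pairings k (p - 1)"
  proof (rule pairings_map[OF P(3)])
    fix a b assume a: "a \<in> set (used_idx rs)" and b: "b \<in> set (used_idx rs)" and ab: "a < b"
    show "gi m a < gi m b" using U[OF a] U[OF b] ab by (auto simp: gi_def)
  next
    fix a assume a: "a \<in> set (used_idx rs)"
    show "gi m a < p - 1" using U[OF a] mp by (auto simp: gi_def)
  qed
  have "map (map_prod (gm m) (gm m)) ?qs = rs"
    unfolding map_map
  proof (rule map_idI)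
    fix x assume x: "x \<in> set rs"
    obtain i j where ij: "x = (i, j)" by (cases x)
    have "i \<in> set (used_idx rs)" "j \<in> set (used_idx rs)" using x ij by (force simp: set_used_idx)+
    then show "(map_prod (gm m) (gm m) \<circ> map_prod (gi m) (gi m)) x = x"
      using U ij by (auto simp: gm_gi)
  qed
  then have "ps = (\<lambda>(m,qs). (0, Suc m) # map (map_prod (gm m) (gm m)) qs) (m, ?qs)"
    using ps_eq i0 m by simp
  moreover have "(m, ?qs) \<in> (SIGMA m:{..<p}. pairings k (p - 1))" using mp qs by auto
  ultimately show "ps \<in> (\<lambda>(m,qs). (0, Suc m) # map (map_prod (gm m) (gm m)) qs) ` (SIGMA m:{..<p}. pairings k (p - 1))"
    by (rule image_eqI)
qed

lemma inj_B: "inj_on (\<lambda>(m,qs). (0::nat, Suc m) # map (map_prod (gm m) (gm m)) qs) A"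
proof (rule inj_onI)
  fix x y assume eq: "(\<lambda>(m,qs). (0::nat, Suc m) # map (map_prod (gm m) (gm m)) qs) x = (\<lambda>(m,qs). (0::nat, Suc m) # map (map_prod (gm m) (gm m)) qs) y"
  obtain m qs where x: "x = (m, qs)" by (cases x)
  obtain m' qs' where y: "y = (m', qs')" by (cases y)
  have mm: "m = m'" using eq x y by simp
  have "inj (map_prod (gm m) (gm m))" using map_prod_inj_on[OF inj_gm inj_gm, of m m] by simp
  then have "qs = qs'" using eq x y mm by (simp add: inj_map_eq_map)
  then show "x = y" using x y mm by simp
qed


lemma rest_B:
  assumes mp: "m < p" and qs: "qs \<in> pairings k (p - 1)"
  shows "rest (Suc p) ((0, Suc m) # map (map_prod (gm m) (gm m)) qs) = map (gm m) (rest (p - 1) qs)"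
proof (rule sorted_distinct_set_unique)
  show "sorted (rest (Suc p) ((0, Suc m) # map (map_prod (gm m) (gm m)) qs))"
    unfolding rest_def by (intro sorted_wrt_filter) (simp del: upt_Suc)
  show "distinct (rest (Suc p) ((0, Suc m) # map (map_prod (gm m) (gm m)) qs))"
    by (simp add: rest_def)
  have so: "sorted (rest (p - 1) qs)"
    unfolding rest_def by (intro sorted_wrt_filter) (simp del: upt_Suc)
  show "sorted (map (gm m) (rest (p - 1) qs))"
    unfolding sorted_map
    by (rule sorted_wrt_mono_rel[OF _ so]) (auto simp: strict_mono_gm strict_mono_less_eq)
  show "distinct (map (gm m) (rest (p - 1) qs))"
    using inj_gm[of m] by (simp add: rest_def distinct_map inj_on_subset[of _ UNIV])
  show "set (rest (Suc p) ((0, Suc m) # map (map_prod (gm m) (gm m)) qs)) = set (map (gm m) (rest (p - 1) qs))"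
  proof (rule set_eqI, rule iffI)
    fix x assume "x \<in> set (rest (Suc p) ((0, Suc m) # map (map_prod (gm m) (gm m)) qs))"
    then have x: "x < Suc p" "x \<noteq> 0" "x \<noteq> Suc m" "x \<notin> gm m ` set (used_idx qs)"
      by (auto simp: rest_def used_idx_map simp del: upt_Suc)
    have "gi m x < p - 1" using x mp by (auto simp: gi_def)
    moreover have "gi m x \<notin> set (used_idx qs)"
      using x(4) gm_gi[OF x(2,3)] by (metis image_eqI)
    ultimately have "gi m x \<in> set (rest (p - 1) qs)" by (simp add: rest_def)
    then show "x \<in> set (map (gm m) (rest (p - 1) qs))"
      using gm_gi[OF x(2,3)] by (metis image_eqI set_map)
  next
    fix x assume "x \<in> set (map (gm m) (rest (p - 1) qs))"
    then obtain c where c: "x = gm m c" "c < p - 1" "c \<notin> set (used_idx qs)"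
      by (auto simp: rest_def)
    have "gm m c < Suc p" using c(2) by (auto simp: gm_def)
    moreover have "gm m c \<notin> gm m ` set (used_idx qs)"
      using c(3) inj_gm by (simp add: inj_image_mem_iff)
    ultimately show "x \<in> set (rest (Suc p) ((0, Suc m) # map (map_prod (gm m) (gm m)) qs))"
      using c(1) by (auto simp: rest_def used_idx_map simp del: upt_Suc)
  qed
qed

lemma set_L:
  assumes "qs \<in> pairings k n"
  shows "distinct (used_idx qs @ rest n qs)" "set (used_idx qs @ rest n qs) = {0..<n}"
  using pairings_distinct[OF assms] pairings_used_less[OF assms]
  by (auto simp: rest_def)

lemma sign_B:
  assumes mp: "m < p" and qs: "qs \<in> pairings k (p - 1)"
  shows "pairing_sign (Suc p) ((0, Suc m) # map (map_prod (gm m) (gm m)) qs) = (-1) ^ m * pairing_sign (p - 1) qs"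
proof -
  let ?L = "used_idx qs @ rest (p - 1) qs"
  have "pairing_sign (Suc p) ((0, Suc m) # map (map_prod (gm m) (gm m)) qs)
      = perm_list_sign (0 # Suc m # map (gm m) ?L)"
    by (simp add: pairing_sign_rest used_idx_map rest_B[OF mp qs])
  also have s1: "perm_list_sign (0 # Suc m # map (gm m) ?L) = (-1) ^ length (filter (\<lambda>x. x < Suc m) (map (gm m) ?L)) * perm_list_sign (map (gm m) ?L)"
    by (subst sign_Cons, subst sign_Cons) simp
  also have "perm_list_sign (map (gm m) ?L) = perm_list_sign ?L"
    by (rule sign_map_mono[OF strict_mono_gm])
  also have "length (filter (\<lambda>x. x < Suc m) (map (gm m) ?L)) = length (filter (\<lambda>c. c < m) ?L)"
    by (simp add: filter_map o_def gm_less_Suc)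
  also have "\<dots> = card ({c. c < m} \<inter> set ?L)"
    by (rule distinct_length_filter) (rule set_L[OF qs])
  also have "{c. c < m} \<inter> set ?L = {..<m}"
    using set_L(2)[OF qs] mp by auto
  finally show ?thesis by (simp add: pairing_sign_rest)
qed


lemma A_Cons: "a_word F (Suc k) (y # ys) = (\<lambda>w. pre y (a_word F (Suc k) ys) w + ext (a_word F k) (cw F y ys) w)"
proof
  fix w
  define p where "p = length ys"
  define T where "T ps = (if nths (y#ys) (- set (used_idx ps)) = w
     then pairing_sign (Suc p) ps * (\<Prod>(i,j)\<leftarrow>ps. F ((y#ys)!i) ((y#ys)!j)) else 0)" for ps
  let ?P = "pairings (Suc k) (Suc p)"
  let ?A = "{ps \<in> ?P. 0 \<notin> set (used_idx ps)}"
  let ?B = "{ps \<in> ?P. 0 \<in> set (used_idx ps)}"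
  have aw: "a_word F (Suc k) (y#ys) w = sum T ?P" unfolding a_word_def by (intro sum.cong) (simp_all add: T_def p_def)
  have PAB: "?P = ?A \<union> ?B" by auto
  have split: "sum T ?P = sum T ?A + sum T ?B"
    by (subst PAB, rule sum.union_disjoint) (auto intro: finite_subset[OF _ finite_pairings])
  have inj_shift: "inj (map (map_prod Suc Suc))"
  proof -
    have "inj (map_prod Suc Suc)" by (auto simp: inj_def)
    then show ?thesis by (simp add: inj_def inj_map_eq_map)
  qed
  have partA: "sum T ?A = pre y (a_word F (Suc k) ys) w"
  proof -
    have "sum T ?A = sum (T \<circ> map (map_prod Suc Suc)) (pairings (Suc k) p)"
      unfolding pairings_A[symmetric] by (rule sum.reindex) (rule inj_on_subset[OF inj_shift], simp)
    also have "\<dots> = (\<Sum>ps\<in>pairings (Suc k) p. if y # nths ys (- set (used_idx ps)) = w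
        then pairing_sign p ps * (\<Prod>(i,j)\<leftarrow>ps. F (ys!i) (ys!j)) else 0)"
    proof (rule sum.cong[OF refl])
      fix ps assume "ps \<in> pairings (Suc k) p"
      have n: "nths (y#ys) (- set (used_idx (map (map_prod Suc Suc) ps))) = y # nths ys (- set (used_idx ps))"
        unfolding nths_rest by (simp add: rest_A p_def)
      have pr: "(\<Prod>(i,j)\<leftarrow>map (map_prod Suc Suc) ps. F ((y#ys)!i) ((y#ys)!j)) = (\<Prod>(i,j)\<leftarrow>ps. F (ys!i) (ys!j))"
        by (simp add: o_def split_def)
      show "(T \<circ> map (map_prod Suc Suc)) ps = (if y # nths ys (- set (used_idx ps)) = w
        then pairing_sign p ps * (\<Prod>(i,j)\<leftarrow>ps. F (ys!i) (ys!j)) else 0)"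
        unfolding o_def T_def n pr sign_A ..
    qed
    also have "\<dots> = pre y (a_word F (Suc k) ys) w"
    proof (cases w)
      case Nil
      then show ?thesis by (simp add: pre_def)
    next
      case (Cons z w')
      have e: "a_word F (Suc k) ys w' = (\<Sum>ps\<in>pairings (Suc k) p. if nths ys (- set (used_idx ps)) = w'
        then pairing_sign p ps * (\<Prod>(i,j)\<leftarrow>ps. F (ys!i) (ys!j)) else 0)"
        unfolding a_word_def p_def ..
      show ?thesis using Cons by (auto simp: pre_def e intro!: sum.neutral)
    qed
    finally show ?thesis .
  qed
  let ?fB = "\<lambda>(m,qs). (0::nat, Suc m) # map (map_prod (gm m) (gm m)) qs"
  have partB: "sum T ?B = ext (a_word F k) (cw F y ys) w"
  proof -
    have "sum T ?B = sum (T \<circ> ?fB) (SIGMA m:{..<p}. pairings k (p - 1))"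
      unfolding pairings_B[symmetric] by (rule sum.reindex) (rule inj_B)
    also have "\<dots> = (\<Sum>m<p. \<Sum>qs\<in>pairings k (p - 1). T (?fB (m, qs)))"
      by (subst sum.Sigma) (auto simp: finite_pairings split_def intro!: sum.cong)
    also have "\<dots> = (\<Sum>m<p. (-1)^m * F y (ys ! m) * a_word F k (del m ys) w)"
    proof (rule sum.cong[OF refl])
      fix m assume "m \<in> {..<p}"
      then have mp: "m < p" by simp
      have ld: "length (del m ys) = p - 1" using mp by (simp add: length_del p_def)
      have "(-1)^m * F y (ys ! m) * a_word F k (del m ys) w =
          (\<Sum>qs\<in>pairings k (p - 1). (-1)^m * F y (ys ! m) * (if nths (del m ys) (- set (used_idx qs)) = w
             then pairing_sign (p - 1) qs * (\<Prod>(i,j)\<leftarrow>qs. F (del m ys ! i) (del m ys ! j)) else 0))"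
        by (simp add: a_word_def ld sum_distrib_left cong: if_cong)
      also have "\<dots> = (\<Sum>qs\<in>pairings k (p - 1). T (?fB (m, qs)))"
      proof (rule sum.cong[OF refl])
        fix qs assume qs: "qs \<in> pairings k (p - 1)"
        have lt: "i < p - 1" "j < p - 1" if "(i,j) \<in> set qs" for i j
          using that qs by (auto simp: pairings_alt)
        have restlt: "c < p - 1" if "c \<in> set (rest (p - 1) qs)" for c
          using that by (simp add: rest_def)
        have n: "nths (y#ys) (- set (used_idx (?fB (m, qs)))) = nths (del m ys) (- set (used_idx qs))"
        proof -
          have "nths (y#ys) (- set (used_idx (?fB (m, qs)))) = map ((!) (y#ys)) (map (gm m) (rest (p - 1) qs))"
            unfolding nths_rest by (simp add: p_def[symmetric] rest_B[OF mp qs] del: map_map)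
          also have "\<dots> = map ((!) (del m ys)) (rest (p - 1) qs)"
            using restlt mp by (auto simp: nth_gm p_def)
          also have "\<dots> = nths (del m ys) (- set (used_idx qs))"
            unfolding nths_rest ld ..
          finally show ?thesis .
        qed
        have pr: "(\<Prod>(i,j)\<leftarrow>?fB (m, qs). F ((y#ys)!i) ((y#ys)!j)) = F y (ys ! m) * (\<Prod>(i,j)\<leftarrow>qs. F (del m ys ! i) (del m ys ! j))"
        proof -
          have "map (\<lambda>(i,j). F ((y#ys)!i) ((y#ys)!j)) (map (map_prod (gm m) (gm m)) qs) = map (\<lambda>(i,j). F (del m ys ! i) (del m ys ! j)) qs"
            using lt mp by (auto simp: nth_gm p_def)
          then show ?thesis by (simp only: prod.case list.map prod_list.Cons nth_Cons_0 nth_Cons_Suc)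
        qed
        show "(-1)^m * F y (ys ! m) * (if nths (del m ys) (- set (used_idx qs)) = w
             then pairing_sign (p - 1) qs * (\<Prod>(i,j)\<leftarrow>qs. F (del m ys ! i) (del m ys ! j)) else 0) = T (?fB (m, qs))"
          unfolding T_def n pr by (simp add: sign_B[OF mp qs] algebra_simps)
      qed
      finally show "(\<Sum>qs\<in>pairings k (p - 1). T (?fB (m, qs))) = (-1)^m * F y (ys ! m) * a_word F k (del m ys) w" ..
    qed
    also have "\<dots> = ext (a_word F k) (cw F y ys) w"
      unfolding cw_def by (subst ext_sum_words) (auto simp: p_def mult.assoc)
    finally show ?thesis .
  qed
  show "a_word F (Suc k) (y # ys) w = pre y (a_word F (Suc k) ys) w + ext (a_word F k) (cw F y ys) w"
    using aw split partA partB by simp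
qed

lemma fin_supp_A[simp]: "fin_supp (a_word F k xs)"
proof (induction k arbitrary: xs)
  case 0
  then show ?case by (simp add: A0)
next
  case (Suc k)
  show ?case
  proof (induction xs)
    case Nil
    then show ?case by (simp add: A_Nil fin_supp_def)
  next
    case (Cons y ys)
    then show ?case
      by (simp add: A_Cons fin_supp_add fin_supp_ext Suc.IH)
  qed
qed

lemma ext_A_pre:
  assumes "fin_supp u"
  shows "ext (a_word F (Suc k)) (pre y u) =
    (\<lambda>w. pre y (ext (a_word F (Suc k)) u) w + ext (a_word F k) (ext (cw F y) u) w)"
proof -
  have "ext (a_word F (Suc k)) (pre y u) =
     ext (\<lambda>v w. 1 * pre y (a_word F (Suc k) v) w + 1 * ext (a_word F k) (cw F y v) w) u"
    by (simp add: ext_pre assms A_Cons)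
  also have "\<dots> = (\<lambda>w. pre y (ext (a_word F (Suc k)) u) w + ext (a_word F k) (ext (cw F y) u) w)"
    by (simp only: ext_flin) (simp add: pre_ext ext_ext assms)
  finally show ?thesis .
qed

lemma comm: "ext (cw F x) (a_word F l ys) = ext (a_word F l) (cw F x ys)"
proof (induction ys arbitrary: x l rule: length_induct)
  case (1 ys)
  show ?case
  proof (cases l)
    case 0
    then show ?thesis by (simp add: A0 ext_word2)
  next
    case (Suc l')
    show ?thesis
    proof (cases ys)
      case Nil
      then show ?thesis using Suc by (simp add: A_Nil)
    next
      case (Cons y zs)
      have IH1: "ext (cw F x) (a_word F l zs) = ext (a_word F l) (cw F x zs)"
        using 1 Cons by simp
      have "ext (cw F x) (ext (a_word F l') (cw F y zs)) = ext (\<lambda>v. ext (cw F x) (a_word F l' v)) (cw F y zs)"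
        by (simp add: ext_ext)
      also have "\<dots> = ext (\<lambda>v. ext (a_word F l') (cw F x v)) (cw F y zs)"
        by (rule ext_cong) (use 1 Cons supp_cw_length in force)
      also have "\<dots> = ext (a_word F l') (ext (cw F x) (cw F y zs))"
        by (simp add: ext_ext)
      also have "\<dots> = (\<lambda>w. - ext (a_word F l') (ext (cw F y) (cw F x zs)) w)"
        by (subst anticomm) (simp add: ext_uminus fin_supp_ext)
      finally have IH2: "ext (cw F x) (ext (a_word F l') (cw F y zs)) = (\<lambda>w. - ext (a_word F l') (ext (cw F y) (cw F x zs)) w)" .
      have L: "ext (cw F x) (a_word F l ys) = (\<lambda>w. (F x y * a_word F l zs w - pre y (ext (cw F x) (a_word F l zs)) w)
          + ext (cw F x) (ext (a_word F l') (cw F y zs)) w)"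
        unfolding Cons Suc A_Cons
        by (simp only: ext_add fin_supp_pre fin_supp_A fin_supp_ext fin_supp_cw ext_cw_pre)
      have R: "ext (a_word F l) (cw F x ys) = (\<lambda>w. F x y * a_word F l zs w - (pre y (ext (a_word F l) (cw F x zs)) w
          + ext (a_word F l') (ext (cw F y) (cw F x zs)) w))"
        unfolding Cons Suc cw_Cons
        by (simp only: ext_diff ext_smult fin_supp_smult fin_supp_pre fin_supp_word fin_supp_cw ext_A_pre ext_word)
      show ?thesis
        unfolding L R IH1 IH2 by (simp add: fun_eq_iff)
    qed
  qed
qed

lemma main_word:
  fixes F :: "'v \<Rightarrow> 'v \<Rightarrow> 'k::field"
  shows "ext (a_word F k) (a_word F l ys) = (\<lambda>w. of_nat ((k + l) choose k) * a_word F (k + l) ys w)"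
proof (induction ys arbitrary: k l rule: length_induct)
  case (1 ys)
  show ?case
  proof (cases k)
    case 0
    then show ?thesis by (simp add: A0 ext_word2)
  next
    case k: (Suc k')
    show ?thesis
    proof (cases l)
      case 0
      then show ?thesis by (simp add: A0)
    next
      case l: (Suc l')
      show ?thesis
      proof (cases ys)
        case Nil
        then show ?thesis using k l by (simp add: A_Nil)
      next
        case (Cons y zs)
        have IH1: "ext (a_word F k) (a_word F l zs) = (\<lambda>w. of_nat ((k + l) choose k) * a_word F (k + l) zs w)"
          using 1 Cons by simp
        have "ext (a_word F k') (ext (cw F y) (a_word F l zs)) = ext (a_word F k') (ext (a_word F l) (cw F y zs))"
          by (simp add: comm)
        also have "\<dots> = ext (\<lambda>v. ext (a_word F k') (a_word F l v)) (cw F y zs)"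
          by (simp add: ext_ext)
        also have "\<dots> = ext (\<lambda>v w. of_nat ((k' + l) choose k') * a_word F (k' + l) v w) (cw F y zs)"
          by (rule ext_cong) (use 1 Cons supp_cw_length in force)
        also have "\<dots> = (\<lambda>w. of_nat ((k' + l) choose k') * ext (a_word F (k' + l)) (cw F y zs) w)"
          by (simp add: ext_fsmult)
        finally have IH2: "ext (a_word F k') (ext (cw F y) (a_word F l zs)) = (\<lambda>w. of_nat ((k' + l) choose k') * ext (a_word F (k' + l)) (cw F y zs) w)" .
        have "ext (a_word F k) (ext (a_word F l') (cw F y zs)) = ext (\<lambda>v. ext (a_word F k) (a_word F l' v)) (cw F y zs)"
          by (simp add: ext_ext)
        also have "\<dots> = ext (\<lambda>v w. of_nat ((k + l') choose k) * a_word F (k + l') v w) (cw F y zs)"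
          by (rule ext_cong) (use 1 Cons supp_cw_length in force)
        also have "\<dots> = (\<lambda>w. of_nat ((k + l') choose k) * ext (a_word F (k + l')) (cw F y zs) w)"
          by (simp add: ext_fsmult)
        finally have IH3: "ext (a_word F k) (ext (a_word F l') (cw F y zs)) = (\<lambda>w. of_nat ((k + l') choose k) * ext (a_word F (k + l')) (cw F y zs) w)" .
        have kl: "k + l = Suc (k' + l)" "k' + l = k + l'" using k l by auto
        have bin: "(k + l) choose k = ((k' + l) choose k') + ((k + l') choose k)"
          using k l by simp
        have bin': "(of_nat (Suc (k' + l) choose k) :: 'k) = of_nat ((k' + l) choose k') + of_nat ((k' + l) choose k)"
          using k by simp
        have "ext (a_word F k) (a_word F l ys) = (\<lambda>w. pre y (ext (a_word F k) (a_word F l zs)) w + ext (a_word F k') (ext (cw F y) (a_word F l zs)) w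
             + ext (a_word F k) (ext (a_word F l') (cw F y zs)) w)"
          unfolding Cons k l by (simp add: A_Cons ext_add fin_supp_ext ext_A_pre)
        also have "\<dots> = (\<lambda>w. of_nat ((k + l) choose k) * a_word F (k + l) ys w)"
          unfolding IH1 IH2 IH3 Cons kl(1) A_Cons
          by (auto simp: fun_eq_iff pre_lin pre_lin[of _ _ _ 0, simplified] kl(2)[symmetric] bin' algebra_simps)
        finally show ?thesis .
      qed
    qed
  qed
qed


theorem mainTheorem6:
  fixes scale :: "'k::field \<Rightarrow> 'v::ab_group_add \<Rightarrow> 'v"
    and F :: "'v \<Rightarrow> 'v \<Rightarrow> 'k"
    and k l :: nat
  assumes "Vector_Spaces.vector_space scale"
    and "bilinear_form scale F"
  shows "\<forall>u. fin_supp u \<longrightarrow>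
      (\<lambda>w. a_op F k (a_op F l u) w - of_nat ((k + l) choose k) * a_op F (k + l) u w) \<in> tensor_rel scale
    \<and> (\<lambda>w. a_op F l (a_op F k u) w - of_nat ((k + l) choose k) * a_op F (k + l) u w) \<in> tensor_rel scale"
proof (intro allI impI conjI)
  fix u :: "'v list \<Rightarrow> 'k" assume u: "fin_supp u"
  have gen: "a_op F a (a_op F b u) = (\<lambda>w. of_nat ((a + b) choose a) * a_op F (a + b) u w)" for a b
  proof -
    have "a_op F a (a_op F b u) = ext (\<lambda>v. ext (a_word F a) (a_word F b v)) u"
      unfolding a_op_ext by (rule ext_ext[OF u]) simp
    also have "\<dots> = ext (\<lambda>v w. of_nat ((a + b) choose a) * a_word F (a + b) v w) u"
      by (simp add: main_word)
    also have "\<dots> = (\<lambda>w. of_nat ((a + b) choose a) * a_op F (a + b) u w)"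
      by (simp add: ext_fsmult a_op_ext)
    finally show ?thesis .
  qed
  have bin: "(l + k) choose l = (k + l) choose k"
    using binomial_symmetric[of k "k + l"] by (simp add: add.commute)
  have z: "(\<lambda>w. (0::'k)) \<in> tensor_rel scale" by (rule tensor_rel.zero)
  show "(\<lambda>w. a_op F k (a_op F l u) w - of_nat ((k + l) choose k) * a_op F (k + l) u w) \<in> tensor_rel scale"
    using z by (simp add: gen)
  show "(\<lambda>w. a_op F l (a_op F k u) w - of_nat ((k + l) choose k) * a_op F (k + l) u w) \<in> tensor_rel scale"
  proof -
    have g2: "a_op F l (a_op F k u) = (\<lambda>w. of_nat ((k + l) choose k) * a_op F (k + l) u w)"
      using gen[of l k] bin unfolding add.commute[of l k] by simp
    show ?thesis using z by (simp add: g2)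
  qed
qed

end
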